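(* No vector $(x_\alpha,\dots,x_1)$ with $\alpha\ge3$ and $x_{\alpha-2}=1$ is realizable.
   Context: All graphs are finite, nonempty, and reflexive (every vertex has a loop). $N[v]$ is the closed neighborhood of $v$ (including $v$). For distinct $v,w$, $w$ strictly corners $v$ if $N[v]\subsetneq N[w]$; $v$ is then a strict corner. Corner ranking: set $G^{(1)}=G$, $k=1$. If $G^{(k)}$ is a clique, give all its vertices rank $k$ and stop. Else if $G^{(k)}$ has no strict corners, give all its vertices rank $\infty$ and stop. Else give every strict corner of $G^{(k)}$ rank $k$, delete them to get $G^{(k+1)}$ (induced subgraph), increase $k$ and repeat. The corner rank is the largest rank of a vertex; $X_k$ is the set of rank-$k$ vertices; cop-win graphs are exactly those of finite corner rank. A vector is a finite list of positive integers; the rank cardinality vector of a graph of corner rank $\alpha$ is $(x_\alpha,\dots,x_1)$ with $x_k=|X_k|$; a vector is realizable if it is the rank cardinality vector of some cop-win graph. *)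

theory Defs
  imports Main
begin

definition refl_graph :: "'a set \<Rightarrow> ('a \<Rightarrow> 'a \<Rightarrow> bool) \<Rightarrow> bool" where
  "refl_graph V E \<longleftrightarrow> finite V \<and> V \<noteq> {} \<and> (\<forall>v\<in>V. E v v) \<and>
     (\<forall>u\<in>V. \<forall>v\<in>V. E u v \<longrightarrow> E v u)"

definition cnbh :: "('a \<Rightarrow> 'a \<Rightarrow> bool) \<Rightarrow> 'a set \<Rightarrow> 'a \<Rightarrow> 'a set" where
  "cnbh E S v = {w \<in> S. E v w}"

definition is_clique :: "('a \<Rightarrow> 'a \<Rightarrow> bool) \<Rightarrow> 'a set \<Rightarrow> bool" where
  "is_clique E S \<longleftrightarrow> (\<forall>u\<in>S. \<forall>v\<in>S. E u v)"

definition strict_corners :: "('a \<Rightarrow> 'a \<Rightarrow> bool) \<Rightarrow> 'a set \<Rightarrow> 'a set" where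
  "strict_corners E S = {v \<in> S. \<exists>w\<in>S. w \<noteq> v \<and> cnbh E S v \<subset> cnbh E S w}"

text \<open>stage E V k is the vertex set of G^(k+1); it becomes empty once the process stops at a
  clique, and stays constant once it stops with no strict corners.\<close>
fun stage :: "('a \<Rightarrow> 'a \<Rightarrow> bool) \<Rightarrow> 'a set \<Rightarrow> nat \<Rightarrow> 'a set" where
  "stage E V 0 = V"
| "stage E V (Suc k) = (if is_clique E (stage E V k) then {}
                        else stage E V k - strict_corners E (stage E V k))"

text \<open>X_k, the set of vertices of rank k (k \<ge> 1).\<close>
definition rank_set :: "('a \<Rightarrow> 'a \<Rightarrow> bool) \<Rightarrow> 'a set \<Rightarrow> nat \<Rightarrow> 'a set" where
  "rank_set E V k = (let S = stage E V (k - 1) in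
      if is_clique E S then S else strict_corners E S)"

text \<open>Cop-win = finite corner rank = every vertex receives a finite rank.\<close>
definition cop_win :: "'a set \<Rightarrow> ('a \<Rightarrow> 'a \<Rightarrow> bool) \<Rightarrow> bool" where
  "cop_win V E \<longleftrightarrow> refl_graph V E \<and> (\<exists>k. stage E V k = {})"

definition corner_rank :: "'a set \<Rightarrow> ('a \<Rightarrow> 'a \<Rightarrow> bool) \<Rightarrow> nat" where
  "corner_rank V E = (LEAST k. stage E V k = {})"

text \<open>Rank cardinality vector (x_alpha, ..., x_1) as a list.\<close>
definition rank_card_vector :: "'a set \<Rightarrow> ('a \<Rightarrow> 'a \<Rightarrow> bool) \<Rightarrow> nat list" where
  "rank_card_vector V E = rev (map (\<lambda>k. card (rank_set E V k)) [1..<corner_rank V E + 1])"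

text \<open>Realizable: the rank cardinality vector of some cop-win graph (vertices taken in nat,
  which is no loss of generality for finite graphs).\<close>
definition realizable :: "nat list \<Rightarrow> bool" where
  "realizable xs \<longleftrightarrow> (\<exists>(V::nat set) E. cop_win V E \<and> rank_card_vector V E = xs)"

end

theory Submission
  imports Defs
begin

lemma max_dom:
  assumes fin: "finite S"
  shows "v \<in> strict_corners E S \<Longrightarrow> \<exists>w\<in>S. w \<notin> strict_corners E S \<and> cnbh E S v \<subset> cnbh E S w"
proof (induction "card S - card (cnbh E S v)" arbitrary: v rule: less_induct)
  case less
  from less.prems obtain w where w: "w \<in> S" "w \<noteq> v" "cnbh E S v \<subset> cnbh E S w"
    unfolding strict_corners_def by auto
  show ?case
  proof (cases "w \<in> strict_corners E S")
    case False
    then show ?thesis using w by blast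
  next
    case True
    have sub: "cnbh E S w \<subseteq> S" unfolding cnbh_def by auto
    have "card (cnbh E S v) < card (cnbh E S w)"
      using w(3) psubset_card_mono[OF rev_finite_subset[OF fin sub]] by blast
    moreover have "card (cnbh E S w) \<le> card S" using card_mono[OF fin sub] .
    ultimately have "card S - card (cnbh E S w) < card S - card (cnbh E S v)" by linarith
    from less.hyps[OF this True] obtain w' where "w' \<in> S" "w' \<notin> strict_corners E S"
      "cnbh E S w \<subset> cnbh E S w'" by blast
    then show ?thesis using w(3) by blast
  qed
qed

lemma key:
  assumes fin: "finite H"
    and refl: "\<forall>x\<in>H. E x x"
    and sym: "\<forall>x\<in>H. \<forall>y\<in>H. E x y \<longrightarrow> E y x"
    and scH: "strict_corners E H = {u}"
    and ncl: "\<not> is_clique E (H - {u})"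
    and last: "is_clique E (H - {u} - strict_corners E (H - {u})) \<or>
               (H - {u} - strict_corners E (H - {u})) - strict_corners E (H - {u} - strict_corners E (H - {u})) = {}"
  shows False
proof -
  define H' where "H' = H - {u}"
  define X where "X = strict_corners E H'"
  define K where "K = H' - X"
  have uH: "u \<in> H" using scH unfolding strict_corners_def by auto
  have finH': "finite H'" using fin unfolding H'_def by auto
  have scI: "x \<in> H \<Longrightarrow> y \<in> H \<Longrightarrow> y \<noteq> x \<Longrightarrow> cnbh E H x \<subset> cnbh E H y \<Longrightarrow> x = u" for x y
  proof -
    assume "x \<in> H" "y \<in> H" "y \<noteq> x" "cnbh E H x \<subset> cnbh E H y"
    then have "x \<in> strict_corners E H" unfolding strict_corners_def by blast
    then show "x = u" using scH by auto
  qed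
  have NH: "x \<in> H' \<Longrightarrow> cnbh E H x = cnbh E H' x \<union> {y \<in> {u}. E x y}" for x
    unfolding cnbh_def H'_def using uH by auto
  have s1: "\<forall>v\<in>X. E v u"
  proof
    fix v assume v: "v \<in> X"
    then obtain w where w: "w \<in> H'" "w \<noteq> v" "cnbh E H' v \<subset> cnbh E H' w"
      unfolding X_def strict_corners_def by auto
    have vH': "v \<in> H'" using v unfolding X_def strict_corners_def by auto
    show "E v u"
    proof (rule ccontr)
      assume "\<not> E v u"
      then have "cnbh E H v = cnbh E H' v" using NH[OF vH'] by auto
      also have "\<dots> \<subset> cnbh E H' w" using w(3) .
      also have "\<dots> \<subseteq> cnbh E H w" using NH[OF w(1)] by auto
      finally have "v = u" using scI[of v w] vH' w unfolding H'_def by auto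
      then show False using vH' unfolding H'_def by auto
    qed
  qed
  have "u \<in> strict_corners E H" using scH by auto
  then obtain z where z: "z \<in> H" "z \<noteq> u" "cnbh E H u \<subset> cnbh E H z"
    unfolding strict_corners_def by blast
  have zH': "z \<in> H'" using z unfolding H'_def by auto
  have Ezu: "E z u"
  proof -
    have "u \<in> cnbh E H u" using refl uH unfolding cnbh_def by auto
    then show ?thesis using z(3) unfolding cnbh_def by auto
  qed
  have Nu_sub: "\<And>x. x \<in> H \<Longrightarrow> E x u \<Longrightarrow> E z x"
  proof -
    fix x assume "x \<in> H" "E x u"
    then have "E u x" using sym uH by auto
    then have "x \<in> cnbh E H u" using \<open>x \<in> H\<close> unfolding cnbh_def by auto
    then show "E z x" using z(3) unfolding cnbh_def by auto
  qed
  have s3: "X \<subseteq> cnbh E H' z"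
  proof
    fix v assume v: "v \<in> X"
    then have vH': "v \<in> H'" unfolding X_def strict_corners_def by auto
    have "E z v" using Nu_sub[of v] s1 v vH' unfolding H'_def by auto
    then show "v \<in> cnbh E H' z" using vH' unfolding cnbh_def by auto
  qed
  obtain w where w: "w \<in> K" "cnbh E H' z \<subseteq> cnbh E H' w"
  proof (cases "z \<in> X")
    case False
    then show ?thesis using that[of z] zH' unfolding K_def by auto
  next
    case True
    from max_dom[OF finH' True[unfolded X_def]] obtain w where
      "w \<in> H'" "w \<notin> strict_corners E H'" "cnbh E H' z \<subset> cnbh E H' w" by blast
    then show ?thesis using that[of w] unfolding K_def X_def by auto
  qed
  have wH': "w \<in> H'" using w unfolding K_def by auto
  have Kcl: "is_clique E K"
  proof (rule ccontr)
    assume nc: "\<not> is_clique E K"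
    then have emp: "K - strict_corners E K = {}" using last unfolding K_def X_def H'_def by auto
    have finK: "finite K" using finH' unfolding K_def by auto
    show False
    proof (cases "w \<in> strict_corners E K")
      case False then show False using emp w(1) by auto
    next
      case True
      from max_dom[OF finK True] obtain w' where "w' \<in> K" "w' \<notin> strict_corners E K" by blast
      then show False using emp by auto
    qed
  qed
  have s6: "\<forall>x\<in>H'. E w x"
  proof
    fix x assume x: "x \<in> H'"
    show "E w x"
    proof (cases "x \<in> X")
      case True
      then have "x \<in> cnbh E H' w" using s3 w(2) by auto
      then show ?thesis unfolding cnbh_def by auto
    next
      case False
      then have "x \<in> K" using x unfolding K_def by auto
      then show ?thesis using Kcl w(1) unfolding is_clique_def by auto
    qed
  qed
  obtain y where y: "y \<in> H'" "\<forall>x\<in>H. E y x"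
  proof (cases "E w u")
    case True
    have "\<forall>x\<in>H. E w x" using s6 True unfolding H'_def by auto
    then show ?thesis using that wH' by auto
  next
    case False
    have NHw: "cnbh E H w = H'" using s6 False uH unfolding cnbh_def H'_def by auto
    have univ: "\<forall>v\<in>H'. \<not> E v u \<longrightarrow> (\<forall>x\<in>H'. E v x)"
    proof (intro ballI impI)
      fix v x assume v: "v \<in> H'" and nvu: "\<not> E v u" and x: "x \<in> H'"
      show "E v x"
      proof (cases "v = w")
        case True then show ?thesis using s6 x by auto
      next
        case False
        have sub: "cnbh E H v \<subseteq> cnbh E H w" using NHw nvu unfolding cnbh_def H'_def by auto
        have "cnbh E H v = cnbh E H w"
        proof (rule ccontr)
          assume "cnbh E H v \<noteq> cnbh E H w"
          then have "cnbh E H v \<subset> cnbh E H w" using sub by auto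
          then have "v = u" using scI[of v w] v wH' False unfolding H'_def by auto
          then show False using v unfolding H'_def by auto
        qed
        then have "x \<in> cnbh E H v" using NHw x by auto
        then show ?thesis unfolding cnbh_def by auto
      qed
    qed
    have "\<forall>x\<in>H. E z x"
    proof
      fix x assume x: "x \<in> H"
      show "E z x"
      proof (cases "x = u")
        case True then show ?thesis using Ezu by auto
      next
        case xu: False
        then have xH': "x \<in> H'" using x unfolding H'_def by auto
        show ?thesis
        proof (cases "E x u")
          case True then show ?thesis using Nu_sub x by auto
        next
          case False
          then have "E x z" using univ xH' zH' by auto
          then show ?thesis using sym x z(1) by auto
        qed
      qed
    qed
    then show ?thesis using that zH' by auto
  qed
  have NHy: "cnbh E H y = H" using y unfolding cnbh_def by auto
  have "is_clique E H'"
    unfolding is_clique_def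
  proof (intro ballI)
    fix a b assume a: "a \<in> H'" and b: "b \<in> H'"
    have "cnbh E H a = H"
    proof (rule ccontr)
      assume ne: "cnbh E H a \<noteq> H"
      have "cnbh E H a \<subseteq> H" unfolding cnbh_def by auto
      then have ps: "cnbh E H a \<subset> cnbh E H y" using ne NHy by auto
      then have "a \<noteq> y" by auto
      then have "a = u" using scI[of a y] ps a y(1) unfolding H'_def by auto
      then show False using a unfolding H'_def by auto
    qed
    then have "b \<in> cnbh E H a" using b unfolding H'_def by auto
    then show "E a b" unfolding cnbh_def by auto
  qed
  then show False using ncl unfolding H'_def by auto
qed

lemma stage_sub: "stage E V k \<subseteq> V"
  by (induction k) auto

declare stage.simps(2) [simp del]

lemma xs2: assumes rv: "rank_card_vector V E = xs" and a_def: "a = corner_rank V E" and a3: "3 \<le> a" and j_def: "j = a - 3"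
  shows "xs ! 2 = card (rank_set E V (Suc j))"
  proof -
    define L where "L = map (\<lambda>k. card (rank_set E V k)) [1..<a + 1]"
    have lL: "length L = a" unfolding L_def by simp
    have "xs ! 2 = rev L ! 2"
      using rv unfolding rank_card_vector_def a_def L_def by simp
    also have "\<dots> = L ! (length L - Suc 2)"
      using a3 lL by (intro rev_nth) simp
    also have "\<dots> = map (\<lambda>k. card (rank_set E V k)) [1..<a + 1] ! j"
    proof -
      have "length L - Suc 2 = j" using lL by (simp add: j_def)
      then show ?thesis unfolding L_def by (simp only:)
    qed
    also have "\<dots> = card (rank_set E V (Suc j))"
    proof -
      have jl: "j < length [1..<a + 1]" using a3 by (simp add: j_def)
      have "[1..<a + 1] ! j = 1 + j" using a3 by (intro nth_upt) (simp add: j_def)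
      then show ?thesis by (simp only: nth_map[OF jl] Suc_eq_plus1_left)
    qed
    finally show ?thesis .
  qed

theorem lemma3p20:
  fixes xs :: "nat list"
  assumes "\<forall>x\<in>set xs. x > 0"
    and "length xs \<ge> 3"
    and "xs ! 2 = 1"
  shows "\<not> realizable xs"
proof
  assume "realizable xs"
  then obtain V :: "nat set" and E where cw: "cop_win V E" and rv: "rank_card_vector V E = xs"
    unfolding realizable_def by auto
  define a where "a = corner_rank V E"
  have rg: "refl_graph V E" and ex: "\<exists>k. stage E V k = {}" using cw unfolding cop_win_def by auto
  have len: "length xs = a" using rv unfolding rank_card_vector_def a_def by auto
  have a3: "a \<ge> 3" using assms(2) len by auto
  have sa: "stage E V a = {}" using LeastI_ex[OF ex] unfolding a_def corner_rank_def .
  have nl: "m < a \<Longrightarrow> stage E V m \<noteq> {}" for m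
    using not_less_Least[of m "\<lambda>k. stage E V k = {}"] unfolding a_def corner_rank_def by auto
  define j where "j = a - 3"
  have aj: "a = Suc (Suc (Suc j))" using a3 unfolding j_def by auto
  define H where "H = stage E V j"
  have "xs ! 2 = card (rank_set E V (Suc j))"
    using xs2[OF rv a_def a3 j_def] .
  then have c1: "card (rank_set E V (Suc j)) = 1" using assms(3) by metis
  have s1: "stage E V (Suc j) \<noteq> {}" by (rule nl) (simp add: aj)
  have eq1: "stage E V (Suc j) = (if is_clique E H then {} else H - strict_corners E H)"
    unfolding H_def by (rule stage.simps(2))
  have Hnc: "\<not> is_clique E H"
  proof
    assume "is_clique E H"
    then have "stage E V (Suc j) = {}" using eq1 by simp
    then show False using s1 by simp
  qed
  have "rank_set E V (Suc j) = strict_corners E H"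
    unfolding rank_set_def Let_def H_def using Hnc[unfolded H_def] by simp
  then have "card (strict_corners E H) = 1" using c1 by simp
  then obtain u where scH: "strict_corners E H = {u}" by (rule card_1_singletonE)
  have st1: "stage E V (Suc j) = H - {u}" using eq1 Hnc scH by simp
  have s2: "stage E V (Suc (Suc j)) \<noteq> {}" by (rule nl) (simp add: aj)
  have eq2: "stage E V (Suc (Suc j)) = (if is_clique E (H - {u}) then {} else H - {u} - strict_corners E (H - {u}))"
    using stage.simps(2)[of E V "Suc j"] unfolding st1 .
  have H'nc: "\<not> is_clique E (H - {u})"
  proof
    assume "is_clique E (H - {u})"
    then have "stage E V (Suc (Suc j)) = {}" using eq2 by simp
    then show False using s2 by simp
  qed
  have st2: "stage E V (Suc (Suc j)) = H - {u} - strict_corners E (H - {u})"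
    using eq2 H'nc by simp
  have last: "is_clique E (H - {u} - strict_corners E (H - {u})) \<or>
               (H - {u} - strict_corners E (H - {u})) - strict_corners E (H - {u} - strict_corners E (H - {u})) = {}"
  proof -
    have e3: "stage E V (Suc (Suc (Suc j))) = {}" using sa unfolding aj .
    have eq: "stage E V (Suc (Suc (Suc j))) = (if is_clique E (H - {u} - strict_corners E (H - {u})) then {}
       else (H - {u} - strict_corners E (H - {u})) - strict_corners E (H - {u} - strict_corners E (H - {u})))"
      using stage.simps(2)[of E V "Suc (Suc j)"] unfolding st2 .
    show ?thesis
    proof (cases "is_clique E (H - {u} - strict_corners E (H - {u}))")
      case True then show ?thesis by (rule disjI1)
    next
      case False
      have "stage E V (Suc (Suc (Suc j))) = (H - {u} - strict_corners E (H - {u})) - strict_corners E (H - {u} - strict_corners E (H - {u}))"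
        using eq False by (simp only: if_False)
      then show ?thesis using e3 by (intro disjI2) (simp only:)
    qed
  qed
  have HV: "H \<subseteq> V" unfolding H_def by (rule stage_sub)
  have fin: "finite H" using rg finite_subset[OF HV] unfolding refl_graph_def by blast
  have refl: "\<forall>x\<in>H. E x x" using rg HV unfolding refl_graph_def by auto
  have sym: "\<forall>x\<in>H. \<forall>y\<in>H. E x y \<longrightarrow> E y x" using rg HV unfolding refl_graph_def by blast
  show False using key[OF fin refl sym scH H'nc last] .
qed

end
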